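(* If $n$ is a non-negative integer, then $$\sum_{k = 1}^n \sum_{j = 0}^{k - 1} \frac{H_{n-j}}{k-j} = (n+1)H_n^2 - (2n+1)H_n + 2n,$$ $$\sum_{k = 1}^n \sum_{j = 0}^{k - 1} \frac{H_{n-j}^2}{k-j} = (n+1)H_n^3 - \frac{3}{2}(2n+1)H_n^2 + 3(2n+1)H_n + \frac{1}{2}H_n^{(2)} - 6n,$$ and $$\sum_{k = 1}^n \sum_{j = 0}^{k - 1} \frac{H_{n-j}^{(2)}}{k-j} = (n+1)H_n H_n^{(2)} - \frac{1}{2}(2n+1)H_n^{(2)} + H_n - \frac{1}{2}H_n^2.$$
   Context: $H_n=\sum_{m=1}^n\frac1m$ and $H_n^{(2)}=\sum_{m=1}^n\frac1{m^2}$. Empty sums are zero. *)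

theory Defs
  imports Complex_Main
begin

definition H :: "nat \<Rightarrow> real" where
  "H n = (\<Sum>m=1..n. 1 / real m)"

definition H2 :: "nat \<Rightarrow> real" where
  "H2 n = (\<Sum>m=1..n. 1 / (real m)^2)"

end

theory Submission
  imports Defs
begin

lemma swap: "(\<Sum>k=1..n. \<Sum>j=0..k-1. a j k) = (\<Sum>j<n. \<Sum>k=Suc j..n. (a j k::real))"
proof (induction n)
  case 0 then show ?case by simp
next
  case (Suc n)
  have "(\<Sum>k=1..Suc n. \<Sum>j=0..k-1. a j k) = (\<Sum>k=1..n. \<Sum>j=0..k-1. a j k) + (\<Sum>j=0..n. a j (Suc n))"
    by simp
  also have "\<dots> = (\<Sum>j<n. \<Sum>k=Suc j..n. a j k) + (\<Sum>j<n. a j (Suc n)) + a n (Suc n)"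
    using Suc by (simp add: atLeast0AtMost lessThan_Suc_atMost[symmetric])
  also have "\<dots> = (\<Sum>j<n. \<Sum>k=Suc j..Suc n. a j k) + a n (Suc n)"
    by (simp add: sum.distrib)
  also have "\<dots> = (\<Sum>j<Suc n. \<Sum>k=Suc j..Suc n. a j k)" by simp
  finally show ?case .
qed

lemma inner: "j < n \<Longrightarrow> (\<Sum>k=Suc j..n. c / real (k - j)) = c * H (n - j)"
proof -
  assume "j < n"
  have "(\<Sum>k=Suc j..n. c / real (k - j)) = (\<Sum>m=1..n-j. c / real m)"
    by (rule sum.reindex_bij_witness[where i="\<lambda>m. m + j" and j="\<lambda>k. k - j"]) auto
  also have "\<dots> = c * H (n - j)" by (simp add: H_def sum_distrib_left)
  finally show ?thesis .
qed

lemma main: "(\<Sum>k=1..n. \<Sum>j=0..k-1. f (n - j) / real (k - j)) = (\<Sum>r=1..n. f r * H r)"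
proof -
  have "(\<Sum>k=1..n. \<Sum>j=0..k-1. f (n - j) / real (k - j)) = (\<Sum>j<n. \<Sum>k=Suc j..n. f (n - j) / real (k - j))"
    by (rule swap)
  also have "\<dots> = (\<Sum>j<n. f (n - j) * H (n - j))"
    by (rule sum.cong[OF refl], rule inner) simp
  also have "\<dots> = (\<Sum>r=1..n. f r * H r)"
    by (rule sum.reindex_bij_witness[where i="\<lambda>r. n - r" and j="\<lambda>j. n - j"]) auto
  finally show ?thesis .
qed

lemma HS: "H (Suc n) = H n + 1 / real (Suc n)" by (simp add: H_def)
lemma H2S: "H2 (Suc n) = H2 n + 1 / real (Suc n)^2" by (simp add: H2_def)

lemma p1: "(\<Sum>r=1..n. H r * H r) = real (n+1) * (H n)^2 - real (2*n+1) * H n + 2 * real n"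
proof (induction n)
  case 0 then show ?case by (simp add: H_def H2_def)
next
  case (Suc n)
  define a where "a = real n + 1"
  have a: "a > 0" "real n = a - 1" "real (Suc n) = a" "real (n+1) = a" "real (Suc n + 1) = a + 1"
    "real (2 * Suc n + 1) = 2*a+1" "real (2 * n + 1) = 2*a-1" unfolding a_def by simp_all
  have hs: "H (Suc n) = H n + 1/a" "H2 (Suc n) = H2 n + 1/a^2" by (simp_all add: HS H2S a)
  have "(\<Sum>r=1..Suc n. H r * H r) = (\<Sum>r=1..n. H r * H r) + (let r = Suc n in H r * H r)" by (simp add: Let_def)
  also have "\<dots> = a * (H n)^2 - (2*a-1) * H n + 2 * (a-1) + (let r = Suc n in H r * H r)"
    using Suc.IH by (simp only: a(2,4,7))
  also have "\<dots> = (a+1) * ((H n + 1/a))^2 - (2*a+1) * (H n + 1/a) + 2 * a"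
    using a(1) by (simp add: Let_def hs field_simps power2_eq_square power3_eq_cube)
  finally show ?case by (simp only: hs a(3,5,6))
qed

lemma p2: "(\<Sum>r=1..n. (H r)^2 * H r) = real (n+1) * (H n)^3 - 3/2 * real (2*n+1) * (H n)^2 + 3 * real (2*n+1) * H n + 1/2 * H2 n - 6 * real n"
proof (induction n)
  case 0 then show ?case by (simp add: H_def H2_def)
next
  case (Suc n)
  define a where "a = real n + 1"
  have a: "a > 0" "real n = a - 1" "real (Suc n) = a" "real (n+1) = a" "real (Suc n + 1) = a + 1"
    "real (2 * Suc n + 1) = 2*a+1" "real (2 * n + 1) = 2*a-1" unfolding a_def by simp_all
  have hs: "H (Suc n) = H n + 1/a" "H2 (Suc n) = H2 n + 1/a^2" by (simp_all add: HS H2S a)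
  have "(\<Sum>r=1..Suc n. (H r)^2 * H r) = (\<Sum>r=1..n. (H r)^2 * H r) + (let r = Suc n in (H r)^2 * H r)" by (simp add: Let_def)
  also have "\<dots> = a * (H n)^3 - 3/2 * (2*a-1) * (H n)^2 + 3 * (2*a-1) * H n + 1/2 * H2 n - 6 * (a-1) + (let r = Suc n in (H r)^2 * H r)"
    using Suc.IH by (simp only: a(2,4,7))
  also have "\<dots> = (a+1) * ((H n + 1/a))^3 - 3/2 * (2*a+1) * ((H n + 1/a))^2 + 3 * (2*a+1) * (H n + 1/a) + 1/2 * (H2 n + 1/a^2) - 6 * a"
    using a(1) by (simp add: Let_def hs field_simps power2_eq_square power3_eq_cube)
  finally show ?case by (simp only: hs a(3,5,6))
qed

lemma p3: "(\<Sum>r=1..n. H2 r * H r) = real (n+1) * H n * H2 n - 1/2 * real (2*n+1) * H2 n + H n - 1/2 * (H n)^2"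
proof (induction n)
  case 0 then show ?case by (simp add: H_def H2_def)
next
  case (Suc n)
  define a where "a = real n + 1"
  have a: "a > 0" "real n = a - 1" "real (Suc n) = a" "real (n+1) = a" "real (Suc n + 1) = a + 1"
    "real (2 * Suc n + 1) = 2*a+1" "real (2 * n + 1) = 2*a-1" unfolding a_def by simp_all
  have hs: "H (Suc n) = H n + 1/a" "H2 (Suc n) = H2 n + 1/a^2" by (simp_all add: HS H2S a)
  have "(\<Sum>r=1..Suc n. H2 r * H r) = (\<Sum>r=1..n. H2 r * H r) + (let r = Suc n in H2 r * H r)" by (simp add: Let_def)
  also have "\<dots> = a * H n * H2 n - 1/2 * (2*a-1) * H2 n + H n - 1/2 * (H n)^2 + (let r = Suc n in H2 r * H r)"
    using Suc.IH by (simp only: a(2,4,7))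
  also have "\<dots> = (a+1) * (H n + 1/a) * (H2 n + 1/a^2) - 1/2 * (2*a+1) * (H2 n + 1/a^2) + (H n + 1/a) - 1/2 * ((H n + 1/a))^2"
    using a(1) by (simp add: Let_def hs field_simps power2_eq_square power3_eq_cube)
  finally show ?case by (simp only: hs a(3,5,6))
qed

theorem proposition12:
  fixes n :: nat
  shows "((\<Sum>k=1..n. \<Sum>j=0..k-1. H (n - j) / real (k - j))
           = real (n+1) * (H n)^2 - real (2*n+1) * H n + 2 * real n)
     \<and> ((\<Sum>k=1..n. \<Sum>j=0..k-1. (H (n - j))^2 / real (k - j))
           = real (n+1) * (H n)^3 - 3/2 * real (2*n+1) * (H n)^2
             + 3 * real (2*n+1) * H n + 1/2 * H2 n - 6 * real n)
     \<and> ((\<Sum>k=1..n. \<Sum>j=0..k-1. H2 (n - j) / real (k - j))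
           = real (n+1) * H n * H2 n - 1/2 * real (2*n+1) * H2 n + H n - 1/2 * (H n)^2)"
    using main[of H n] main[of "\<lambda>r. (H r)^2" n] main[of H2 n] p1[of n] p2[of n] p3[of n]
  by (simp add: power2_eq_square)

end
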